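(* If $n\ge 1$ and $k\ge 3$ are integers, then the maximum degree of the $k$-Pell graph $\Pi_{n,k}$ is $\Delta(\Pi_{n,k})=2n$ and its minimum degree is $\delta(\Pi_{n,k})=\lceil n/2\rceil$.
   Context: For an integer $k\ge 2$, a $k$-Pell string is a finite word over the alphabet $\{0,1,\ldots,k-1,kk\}$, i.e. a word over $\{0,1,\ldots,k\}$ in which every maximal run of the letter $k$ has even length. For $n\ge 0$, the $k$-Pell graph $\Pi_{n,k}$ has as vertices all $k$-Pell strings of length $n$, and two vertices are adjacent if one is obtained from the other either by replacing a single letter $i$ by $i+1$ (or vice versa) for some $i\in\{0,1,\ldots,k-2\}$, or by replacing one factor $(k-1)(k-1)$ by $kk$ (or vice versa), in such a way that the resulting string is again a $k$-Pell string. *)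

theory Defs
  imports Main
begin

text \<open>Letters 0..k are natural numbers; the letter k may only occur in blocks kk.
  A k-Pell string is a word over the alphabet {0,...,k-1,kk}, i.e. a concatenation of
  tokens [i] (i < k) and [k,k].\<close>

definition pell_string :: "nat \<Rightarrow> nat list \<Rightarrow> bool" where
  "pell_string k w \<longleftrightarrow>
     (\<exists>ts. (\<forall>t\<in>set ts. (\<exists>i<k. t = [i]) \<or> t = [k, k]) \<and> w = concat ts)"

definition pell_vertices :: "nat \<Rightarrow> nat \<Rightarrow> nat list set" where
  "pell_vertices n k = {w. length w = n \<and> pell_string k w}"

definition pell_step :: "nat \<Rightarrow> nat list \<Rightarrow> nat list \<Rightarrow> bool" where
  "pell_step k u v \<longleftrightarrow>
     (\<exists>x y i. i + 2 \<le> k \<and> u = x @ [i] @ y \<and> v = x @ [i + 1] @ y)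
   \<or> (\<exists>x y. u = x @ [k - 1, k - 1] @ y \<and> v = x @ [k, k] @ y)"

definition pell_adj :: "nat \<Rightarrow> nat \<Rightarrow> nat list \<Rightarrow> nat list \<Rightarrow> bool" where
  "pell_adj n k u v \<longleftrightarrow> u \<in> pell_vertices n k \<and> v \<in> pell_vertices n k \<and>
     (pell_step k u v \<or> pell_step k v u)"

definition pell_degree :: "nat \<Rightarrow> nat \<Rightarrow> nat list \<Rightarrow> nat" where
  "pell_degree n k u = card {v. pell_adj n k u v}"

definition pell_max_degree :: "nat \<Rightarrow> nat \<Rightarrow> nat" where
  "pell_max_degree n k = Max (pell_degree n k ` pell_vertices n k)"

definition pell_min_degree :: "nat \<Rightarrow> nat \<Rightarrow> nat" where
  "pell_min_degree n k = Min (pell_degree n k ` pell_vertices n k)"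

end

theory Submission imports Defs begin

definition tokok :: "nat \<Rightarrow> nat list \<Rightarrow> bool" where
  "tokok k t \<longleftrightarrow> (\<exists>i<k. t = [i]) \<or> t = [k, k]"

lemma pell_concat: "\<forall>t\<in>set ts. tokok k t \<Longrightarrow> pell_string k (concat ts)"
  unfolding pell_string_def tokok_def by blast

lemma pell_tokens: "pell_string k w \<Longrightarrow> \<exists>ts. (\<forall>t\<in>set ts. tokok k t) \<and> w = concat ts"
  unfolding pell_string_def tokok_def by blast

lemma pell_append: "pell_string k a \<Longrightarrow> pell_string k b \<Longrightarrow> pell_string k (a @ b)"
proof -
  assume "pell_string k a" "pell_string k b"
  then obtain ts1 ts2 where "\<forall>t\<in>set ts1. tokok k t" "a = concat ts1"
    "\<forall>t\<in>set ts2. tokok k t" "b = concat ts2" using pell_tokens by metis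
  then show ?thesis using pell_concat[of "ts1 @ ts2" k] by auto
qed

lemma pell_small: "set w \<subseteq> {..<k} \<Longrightarrow> pell_string k w"
  using pell_concat[of "map (\<lambda>a. [a]) w" k] by (auto simp: tokok_def concat_map_singleton)

lemma pell_set: "pell_string k w \<Longrightarrow> set w \<subseteq> {..k}"
proof -
  assume "pell_string k w"
  then obtain ts where ts: "\<forall>t\<in>set ts. tokok k t" "w = concat ts" using pell_tokens by metis
  have "\<forall>t\<in>set ts. set t \<subseteq> {..k}" using ts(1) by (auto simp: tokok_def)
  then show ?thesis using ts(2) by auto
qed

lemma pell_consk: "pell_string k (k # w) \<Longrightarrow> \<exists>w'. w = k # w' \<and> pell_string k w'"
proof -
  assume "pell_string k (k # w)"
  then obtain ts where ts: "\<forall>t\<in>set ts. tokok k t" "k # w = concat ts" using pell_tokens by metis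
  then obtain t ts' where tt: "ts = t # ts'"
    by (cases ts) auto
  have "tokok k t" using ts tt by auto
  moreover have "\<forall>t\<in>set ts'. tokok k t" using ts tt by auto
  ultimately show ?thesis using ts(2) tt pell_concat[of ts' k] by (auto simp: tokok_def)
qed

lemma pell_even_prefix: "pell_string k (replicate j k @ a # z) \<Longrightarrow> a \<noteq> k \<Longrightarrow> even j"
proof (induction j rule: less_induct)
  case (less j)
  show ?case
  proof (cases j)
    case 0 then show ?thesis by simp
  next
    case (Suc j1)
    show ?thesis
    proof (cases j1)
      case 0
      then show ?thesis using less.prems Suc pell_consk[of k "a # z"] by auto
    next
      case (Suc j2)
      with \<open>j = Suc j1\<close> less.prems pell_consk[of k "k # replicate j2 k @ a # z"]
      have "pell_string k (replicate j2 k @ a # z)" by auto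
      then have "even j2" using less.IH[of j2] \<open>j = Suc j1\<close> Suc less.prems by auto
      then show ?thesis using \<open>j = Suc j1\<close> Suc by auto
    qed
  qed
qed

lemma fin_vertices: "finite (pell_vertices n k)"
proof -
  have "pell_vertices n k \<subseteq> {w. set w \<subseteq> {..k} \<and> length w = n}"
    unfolding pell_vertices_def using pell_set by auto
  then show ?thesis using finite_lists_length_eq[of "{..k}" n] finite_subset by blast
qed

definition gmove :: "nat \<Rightarrow> nat list \<Rightarrow> nat \<times> bool \<Rightarrow> nat list" where
  "gmove k u pb = (let p = fst pb in
     if snd pb then (if u ! p + 2 \<le> k then u[p := u ! p + 1] else u[p := k, Suc p := k])
     else (if u ! p = k then u[p := k - 1, Suc p := k - 1] else u[p := u ! p - 1]))"

lemma gA: "i + 2 \<le> k \<Longrightarrow> gmove k (x @ [i] @ y) (length x, True) = x @ [i + 1] @ y"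
  by (simp add: gmove_def nth_append list_update_append)
lemma gC: "k \<ge> 3 \<Longrightarrow> gmove k (x @ [k - 1, k - 1] @ y) (length x, True) = x @ [k, k] @ y"
  by (simp add: gmove_def nth_append list_update_append)
lemma gB: "i + 2 \<le> k \<Longrightarrow> gmove k (x @ [i+1] @ y) (length x, False) = x @ [i] @ y"
  by (simp add: gmove_def nth_append list_update_append)
lemma gD: "k \<ge> 3 \<Longrightarrow> gmove k (x @ [k, k] @ y) (length x, False) = x @ [k - 1, k - 1] @ y"
  by (simp add: gmove_def nth_append list_update_append)

lemma nbr_sub: assumes "k \<ge> 3" "length u = n"
  shows "{v. pell_adj n k u v} \<subseteq> gmove k u ` ({0..<n} \<times> UNIV)"
proof
  fix v assume "v \<in> {v. pell_adj n k u v}"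
  then have "pell_step k u v \<or> pell_step k v u" unfolding pell_adj_def by auto
  then show "v \<in> gmove k u ` ({0..<n} \<times> UNIV)"
    unfolding pell_step_def
  proof (elim disjE exE conjE)
    fix x y i assume h: "i + 2 \<le> k" "u = x @ [i] @ y" "v = x @ [i + 1] @ y"
    have "v = gmove k u (length x, True)" using gA[OF h(1)] h by simp
    moreover have "length x < n" using assms h by auto
    ultimately show ?thesis by auto
  next
    fix x y assume h: "u = x @ [k - 1, k - 1] @ y" "v = x @ [k, k] @ y"
    have "v = gmove k u (length x, True)" using gC[OF assms(1)] h by simp
    moreover have "length x < n" using assms h by auto
    ultimately show ?thesis by auto
  next
    fix x y i assume h: "i + 2 \<le> k" "v = x @ [i] @ y" "u = x @ [i + 1] @ y"
    have "v = gmove k u (length x, False)" using gB[OF h(1)] h by simp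
    moreover have "length x < n" using assms h by auto
    ultimately show ?thesis by auto
  next
    fix x y assume h: "v = x @ [k - 1, k - 1] @ y" "u = x @ [k, k] @ y"
    have "v = gmove k u (length x, False)" using gD[OF assms(1)] h by simp
    moreover have "length x < n" using assms h by auto
    ultimately show ?thesis by auto
  qed
qed

lemma nbr_fin: assumes "k \<ge> 3" "length u = n" shows "finite {v. pell_adj n k u v}"
  by (rule finite_subset[OF nbr_sub[OF assms]]) simp

lemma deg_le: assumes "k \<ge> 3" "length u = n" shows "pell_degree n k u \<le> 2 * n"
proof -
  have "pell_degree n k u \<le> card (gmove k u ` ({0..<n} \<times> (UNIV::bool set)))"
    unfolding pell_degree_def by (rule card_mono[OF _ nbr_sub[OF assms]]) simp
  also have "\<dots> \<le> card ({0..<n} \<times> (UNIV::bool set))" by (rule card_image_le) simp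
  also have "\<dots> = 2 * n" by (simp add: card_cartesian_product)
  finally show ?thesis .
qed

definition tmod :: "nat \<Rightarrow> nat list \<Rightarrow> nat list" where
  "tmod k t = (if t = [k, k] then [k - 1, k - 1] else if hd t = 0 then [1] else [hd t - 1])"

lemma tmod_props: assumes "k \<ge> 3" "tokok k t"
  shows "tokok k (tmod k t) \<or> tmod k t = [k-1, k-1]" "length (tmod k t) = length t" "tmod k t \<noteq> t"
    "pell_string k (tmod k t)"
  using assms by (auto simp: tmod_def tokok_def intro!: pell_small)

lemma len_tokens: "\<forall>t\<in>set ts. tokok k t \<Longrightarrow> length (concat ts) \<le> 2 * length ts"
  by (induction ts) (auto simp: tokok_def)

lemma deg_ge: assumes "k \<ge> 3" "u \<in> pell_vertices n k" shows "(n + 1) div 2 \<le> pell_degree n k u"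
proof -
  obtain ts where ts: "\<forall>t\<in>set ts. tokok k t" "u = concat ts"
    using assms(2) pell_tokens unfolding pell_vertices_def by blast
  have lu: "length u = n" using assms(2) unfolding pell_vertices_def by auto
  define h where "h j = concat (take j ts) @ tmod k (ts ! j) @ concat (drop (Suc j) ts)" for j
  have split: "u = concat (take j ts) @ ts ! j @ concat (drop (Suc j) ts)" if "j < length ts" for j
    using ts(2) id_take_nth_drop[OF that] by (metis concat.simps(2) concat_append)
  have pt: "pell_string k (concat (take j ts))" "pell_string k (concat (drop (Suc j) ts))" for j
    using ts(1) by (auto intro!: pell_concat dest: in_set_takeD in_set_dropD)
  have adj: "pell_adj n k u (h j)" if j: "j < length ts" for j
  proof -
    have tj: "tokok k (ts ! j)" using ts(1) j by auto
    have ph: "pell_string k (h j)" unfolding h_def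
      using pt tmod_props(4)[OF assms(1) tj] by (intro pell_append)
    have lh: "length (h j) = n" using lu split[OF j] tmod_props(2)[OF assms(1) tj] unfolding h_def by simp
    have st: "pell_step k u (h j) \<or> pell_step k (h j) u"
    proof -
      consider i where "i < k" "ts ! j = [i]" | "ts ! j = [k, k]" using tj tokok_def by blast
      then show ?thesis
      proof cases
        case (1 i)
        show ?thesis
        proof (cases "i = 0")
          case True
          then have "pell_step k u (h j)" unfolding pell_step_def h_def
            using split[OF j] 1 assms(1) by (intro disjI1 exI[of _ "concat (take j ts)"] exI[of _ "concat (drop (Suc j) ts)"] exI[of _ 0]) (auto simp: tmod_def)
          then show ?thesis ..
        next
          case False
          then have "pell_step k (h j) u" unfolding pell_step_def h_def
            using split[OF j] 1 assms(1) by (intro disjI1 exI[of _ "concat (take j ts)"] exI[of _ "concat (drop (Suc j) ts)"] exI[of _ "i - 1"]) (auto simp: tmod_def)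
          then show ?thesis ..
        qed
      next
        case 2
        then have "pell_step k (h j) u" unfolding pell_step_def h_def
          using split[OF j] by (intro disjI2 exI[of _ "concat (take j ts)"] exI[of _ "concat (drop (Suc j) ts)"]) (auto simp: tmod_def)
        then show ?thesis ..
      qed
    qed
    show ?thesis unfolding pell_adj_def using assms(2) ph lh st by (auto simp: pell_vertices_def)
  qed
  have inj: "inj_on h {0..<length ts}"
  proof -
    have ne: "h j1 \<noteq> h j2" if "j1 < j2" "j2 < length ts" for j1 j2
    proof
      assume eq: "h j1 = h j2"
      have j1: "j1 < length ts" using that by auto
      have tj: "tokok k (ts ! j1)" using ts(1) j1 by auto
      have "take j2 ts = take j1 ts @ [ts ! j1] @ take (j2 - Suc j1) (drop (Suc j1) ts)"
      proof -
        have "take j2 ts = take (Suc j1 + (j2 - Suc j1)) ts" using that by simp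
        also have "\<dots> = take (Suc j1) ts @ take (j2 - Suc j1) (drop (Suc j1) ts)" by (rule take_add)
        also have "take (Suc j1) ts = take j1 ts @ [ts ! j1]" by (rule take_Suc_conv_app_nth[OF j1])
        finally show ?thesis by simp
      qed
      then have "h j2 = concat (take j1 ts) @ ts ! j1 @ (concat (take (j2 - Suc j1) (drop (Suc j1) ts)) @ tmod k (ts ! j2) @ concat (drop (Suc j2) ts))"
        unfolding h_def by simp
      with eq have "tmod k (ts ! j1) @ concat (drop (Suc j1) ts) = ts ! j1 @ (concat (take (j2 - Suc j1) (drop (Suc j1) ts)) @ tmod k (ts ! j2) @ concat (drop (Suc j2) ts))"
        unfolding h_def by simp
      then have "tmod k (ts ! j1) = ts ! j1" using tmod_props(2)[OF assms(1) tj]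
        by (simp add: append_eq_append_conv)
      then show False using tmod_props(3)[OF assms(1) tj] by simp
    qed
    show ?thesis unfolding inj_on_def
    proof (intro ballI impI)
      fix a b assume ab: "a \<in> {0..<length ts}" "b \<in> {0..<length ts}" "h a = h b"
      show "a = b"
      proof (rule ccontr)
        assume "a \<noteq> b"
        then consider "a < b" | "b < a" by linarith
        then show False using ne ab by cases (auto, metis)
      qed
    qed
  qed
  have "length ts = card {0..<length ts}" by simp
  also have "\<dots> \<le> pell_degree n k u" unfolding pell_degree_def
    by (rule card_inj_on_le[OF inj _ nbr_fin[OF assms(1) lu]]) (use adj in auto)
  finally have "length ts \<le> pell_degree n k u" .
  moreover have "n \<le> 2 * length ts" using len_tokens[OF ts(1)] lu ts(2) by simp
  ultimately show ?thesis by linarith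
qed


lemma rep_split: "p < n \<Longrightarrow> replicate n a = replicate p a @ [a] @ replicate (n - p - 1) a"
  by (metis Suc_diff_Suc append_Cons append_Nil diff_Suc_eq_diff_pred le_add_diff_inverse less_imp_le_nat replicate_Suc replicate_add diff_diff_left Suc_eq_plus1)

lemma deg_rep: assumes "k \<ge> 3" "n \<ge> 1" shows "2 * n \<le> pell_degree n k (replicate n 1)"
proof -
  define u where "u = replicate n (1::nat)"
  define h where "h pb = u[fst pb := (if snd pb then 2 else 0)]" for pb :: "nat \<times> bool"
  have lu: "length u = n" unfolding u_def by simp
  have uV: "u \<in> pell_vertices n k" unfolding pell_vertices_def u_def using assms
    by (auto intro!: pell_small)
  have adj: "pell_adj n k u (h pb)" if "pb \<in> {0..<n} \<times> UNIV" for pb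
  proof -
    obtain p b where pb0: "pb = (p, b)" by (cases pb)
    have pb: "pb = (p, b)" "p < n" using pb0 that by auto
    have us: "u = replicate p 1 @ [1] @ replicate (n - p - 1) 1" unfolding u_def by (rule rep_split[OF pb(2)])
    have hs: "h pb = replicate p 1 @ [if b then 2 else 0] @ replicate (n - p - 1) 1"
      unfolding h_def pb(1) by (subst us) (simp add: list_update_append)
    have hV: "h pb \<in> pell_vertices n k" unfolding pell_vertices_def hs using assms pb
      by (auto intro!: pell_small)
    have "pell_step k u (h pb) \<or> pell_step k (h pb) u"
    proof (cases b)
      case True
      then have "pell_step k u (h pb)" unfolding pell_step_def using us hs assms
        by (intro disjI1 exI[of _ "replicate p 1"] exI[of _ "replicate (n - p - 1) 1"] exI[of _ 1]) auto
      then show ?thesis ..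
    next
      case False
      then have "pell_step k (h pb) u" unfolding pell_step_def using us hs assms
        by (intro disjI1 exI[of _ "replicate p 1"] exI[of _ "replicate (n - p - 1) 1"] exI[of _ 0]) auto
      then show ?thesis ..
    qed
    then show ?thesis unfolding pell_adj_def using uV hV by auto
  qed
  have inj: "inj_on h ({0..<n} \<times> UNIV)"
  proof (rule inj_onI)
    fix a b assume ab: "a \<in> {0..<n} \<times> UNIV" "b \<in> {0..<n} \<times> UNIV" "h a = h b"
    obtain p1 b1 p2 b2 where a: "a = (p1, b1)" "b = (p2, b2)" "p1 < n" "p2 < n" using ab by auto
    have "h a ! p1 = h b ! p1" using ab by simp
    then have "(if b1 then 2 else 0) = (if p1 = p2 then (if b2 then 2 else 0) else (1::nat))"
      unfolding h_def a using lu a by (simp add: nth_list_update u_def)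
    then show "a = b" using a by (auto split: if_splits)
  qed
  have "2 * n = card ({0..<n} \<times> (UNIV::bool set))" by (simp add: card_cartesian_product)
  also have "\<dots> \<le> pell_degree n k u" unfolding pell_degree_def
    by (rule card_inj_on_le[OF inj _ nbr_fin[OF assms(1) lu]]) (use adj in auto)
  finally show ?thesis unfolding u_def .
qed

lemma concat_kk: "concat (replicate m [k, k]) = replicate (2 * m) k"
  by (induction m) auto

lemma deg_min: fixes n k :: nat assumes "k \<ge> 3" defines "w \<equiv> replicate (2 * (n div 2)) k @ replicate (n mod 2) (0::nat)"
  shows "w \<in> pell_vertices n k" "pell_degree n k w \<le> (n + 1) div 2"
proof -
  define m where "m = n div 2"
  have w: "w = replicate (2 * m) k @ replicate (n mod 2) 0" unfolding w_def m_def by simp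
  have lw: "length w = n" unfolding w m_def by (simp; presburger)
  have z: "set (replicate (n mod 2) (0::nat)) \<subseteq> {..<k}" using assms(1) by auto
  show wV: "w \<in> pell_vertices n k" unfolding pell_vertices_def
    using lw assms(1) z pell_append[OF pell_concat[of "replicate m [k,k]" k] pell_small[of "replicate (n mod 2) 0" k]]
    by (auto simp: w tokok_def concat_kk)
  have wnth: "w ! p = (if p < 2 * m then k else 0)" if "p < n" for p
  proof -
    have "n = 2 * m + n mod 2" unfolding m_def by presburger
    then show ?thesis using that unfolding w by (auto simp: nth_append nth_replicate)
  qed
  have setw: "set w \<subseteq> {k, 0}" unfolding w by auto
  define f where "f j = replicate (2 * j) k @ [k - 1, k - 1] @ replicate (2 * m - 2 * j - 2) k @ replicate (n mod 2) (0::nat)" for j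
  define S where "S = f ` {..<m} \<union> (if odd n then {replicate (2 * m) k @ [1]} else {})"
  have sub: "{v. pell_adj n k w v} \<subseteq> S"
  proof
    fix v assume "v \<in> {v. pell_adj n k w v}"
    then have vV: "v \<in> pell_vertices n k" and st: "pell_step k w v \<or> pell_step k v w" unfolding pell_adj_def by auto
    from st show "v \<in> S" unfolding pell_step_def
    proof (elim disjE exE conjE)
      fix x y i assume h: "i + 2 \<le> k" "w = x @ [i] @ y" "v = x @ [i + 1] @ y"
      have lx: "length x < n" using lw h by auto
      have "w ! length x = i" using h by simp
      then have "\<not> length x < 2 * m" "i = 0" using wnth[OF lx] h(1) by (auto split: if_splits)
      then have lx2: "length x = 2 * m" "odd n" using lx m_def by auto
      have "x = take (length x) w" using h by simp
      then have xe: "x = replicate (2 * m) k" using lx2 unfolding w by simp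
      have "y = []" using lw h lx2 m_def by (cases y) auto
      then have "v = replicate (2 * m) k @ [1]" using h xe \<open>i = 0\<close> by simp
      then show ?thesis unfolding S_def using lx2 by simp
    next
      fix x y assume h: "w = x @ [k - 1, k - 1] @ y" "v = x @ [k, k] @ y"
      have "k - 1 \<in> set w" using h by simp
      then show ?thesis using setw assms(1) by auto
    next
      fix x y i assume h: "i + 2 \<le> k" "v = x @ [i] @ y" "w = x @ [i + 1] @ y"
      have "i + 1 \<in> set w" using h by simp
      then show ?thesis using setw h(1) by auto
    next
      fix x y assume h: "v = x @ [k - 1, k - 1] @ y" "w = x @ [k, k] @ y"
      have lx: "Suc (length x) < n" using lw h by auto
      have "w ! Suc (length x) = k" using h by (simp add: nth_append)
      then have lx2: "Suc (length x) < 2 * m" using wnth[OF lx] assms(1) by (auto split: if_splits)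
      have "x = take (length x) w" using h by simp
      then have xe: "x = replicate (length x) k" using lx2 unfolding w by simp
      have "pell_string k v" using vV unfolding pell_vertices_def by simp
      then have "pell_string k (replicate (length x) k @ (k - 1) # (k - 1) # y)" using h xe by simp
      then have "even (length x)" by (rule pell_even_prefix) (use assms(1) in simp)
      then obtain j where j: "length x = 2 * j" by blast
      have jm: "j < m" using lx2 j by simp
      have "y = drop (length x + 2) w" using h by simp
      then have ye: "y = replicate (2 * m - 2 * j - 2) k @ replicate (n mod 2) 0"
        using j jm unfolding w by simp
      have "v = f j" unfolding f_def using h xe j ye by simp
      then show ?thesis unfolding S_def using jm by simp
    qed
  qed
  have "card S \<le> card (f ` {..<m}) + card (if odd n then {replicate (2 * m) k @ [1]} else {})"
    unfolding S_def by (rule card_Un_le)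
  also have "\<dots> \<le> m + (if odd n then 1 else 0)"
    using card_image_le[of "{..<m}" f] by simp
  also have "\<dots> = (n + 1) div 2" unfolding m_def by presburger
  finally have "card S \<le> (n + 1) div 2" .
  moreover have "finite S" unfolding S_def by simp
  ultimately show "pell_degree n k w \<le> (n + 1) div 2"
    unfolding pell_degree_def using card_mono[OF _ sub] by linarith
qed

theorem corollary5p5:
  fixes n k :: nat
  assumes "n \<ge> 1" and "k \<ge> 3"
  shows "pell_max_degree n k = 2 * n \<and> pell_min_degree n k = (n + 1) div 2"
proof
  have fin: "finite (pell_degree n k ` pell_vertices n k)" using fin_vertices by simp
  have lenV: "length u = n" if "u \<in> pell_vertices n k" for u using that unfolding pell_vertices_def by simp
  have rV: "replicate n 1 \<in> pell_vertices n k" unfolding pell_vertices_def using assms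
    by (auto intro!: pell_small)
  have "pell_degree n k (replicate n 1) = 2 * n"
    using deg_rep[OF assms(2,1)] deg_le[OF assms(2), of "replicate n 1" n] by simp
  then have "2 * n \<in> pell_degree n k ` pell_vertices n k" using rV by (metis image_eqI)
  then show "pell_max_degree n k = 2 * n" unfolding pell_max_degree_def
    by (rule Max_eqI[OF fin, rotated]) (use deg_le[OF assms(2) lenV] in auto)
  define w where "w \<equiv> replicate (2 * (n div 2)) k @ replicate (n mod 2) (0::nat)"
  have "pell_degree n k w = (n + 1) div 2"
    using deg_min[OF assms(2)] deg_ge[OF assms(2)] unfolding w_def by (meson antisym)
  then have "(n + 1) div 2 \<in> pell_degree n k ` pell_vertices n k"
    using deg_min(1)[where n=n, OF assms(2)] unfolding w_def[symmetric] by (metis image_eqI)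
  then show "pell_min_degree n k = (n + 1) div 2" unfolding pell_min_degree_def
    by (rule Min_eqI[OF fin, rotated]) (use deg_ge[OF assms(2)] in auto)
qed

end
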